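(* Let $\mathcal{X}=(0,\pi)$ and let $\mu$ be either Lebesgue measure or $\mu_{\alpha,\beta}$ for some $\alpha,\beta>-1$. Fix $0<\xi\le1$. Assume there are constants $s>\xi$ and $c>0$ such that $\mu(B_r)\ge c\,r^s$ for every ball $B_r$ in $\mathcal{X}$ of radius $r<\operatorname{diam}\mathcal{X}$. Then the sublinear operator $f\mapsto U_\xi|f|$ is bounded from $L^1(\mathcal{X},d\mu)$ to weak $L^{s/(s-\xi)}(\mathcal{X},d\mu)$, i.e. $\mu(\{U_\xi|f|>\lambda\})\le\big(C\|f\|_{L^1(\mu)}/\lambda\big)^{s/(s-\xi)}$ for all $\lambda>0$ and $f\in L^1(d\mu)$.
   Context: $d\mu_{\alpha,\beta}(\theta)=(\sin\frac\theta2)^{2\alpha+1}(\cos\frac\theta2)^{2\beta+1}d\theta$ on $(0,\pi)$. Balls in $\mathcal{X}$ are $B(\theta,r)=\{\varphi\in(0,\pi):|\theta-\varphi|<r\}$. For $f\ge0$, $U_\xi f(\theta)=\int_{\mathcal{X}}\frac{|\theta-\varphi|^\xi}{\mu(B(\theta,|\theta-\varphi|))}f(\varphi)\,d\mu(\varphi)$. *)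

theory Defs
  imports "HOL-Analysis.Analysis"
begin

definition Xsp :: "real set" where "Xsp = {0<..<pi}"

definition leb_X :: "real measure" where
  "leb_X = restrict_space lborel Xsp"

definition mu_ab :: "real \<Rightarrow> real \<Rightarrow> real measure" where
  "mu_ab a b = density (restrict_space lborel Xsp)
     (\<lambda>\<theta>. ennreal ((sin (\<theta>/2)) powr (2*a+1) * (cos (\<theta>/2)) powr (2*b+1)))"

definition ballX :: "real \<Rightarrow> real \<Rightarrow> real set" where
  "ballX \<theta> r = {\<phi> \<in> Xsp. \<bar>\<theta> - \<phi>\<bar> < r}"

text \<open>The operator U_xi, applied to nonnegative f (value in [0,inf]).\<close>
definition U_op :: "real measure \<Rightarrow> real \<Rightarrow> (real \<Rightarrow> real) \<Rightarrow> real \<Rightarrow> ennreal" where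
  "U_op M \<xi> f \<theta> = (\<integral>\<^sup>+ \<phi>. ennreal (\<bar>\<theta> - \<phi>\<bar> powr \<xi> / measure M (ballX \<theta> \<bar>\<theta> - \<phi>\<bar>) * f \<phi>) \<partial>M)"

end

theory Submission
  imports Defs
begin


lemma Xsp_borel[measurable]: "Xsp \<in> sets borel" by (simp add: Xsp_def)

lemma series_id:
  fixes m a :: real and k :: nat
  assumes m: "0 < m"
  shows "(m / 2^(k+1)) powr (-a) * (2 * (m / 2^k)) = 2 powr (1+a) * m powr (1-a) * (2 powr (a-1))^k"
proof -
  have e1: "m / 2^(k+1) = exp (ln m - real (k+1) * ln 2)"
    using m by (simp add: exp_diff ln_realpow[symmetric] del: of_nat_Suc)
  have e2: "2 * (m / 2^k) = exp (ln 2 + ln m - real k * ln 2)"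
    using m by (simp add: exp_diff exp_add ln_realpow[symmetric])
  have e3: "(2 powr (a-1))^k = exp (real k * ((a-1) * ln 2))"
    by (simp add: powr_def exp_of_nat_mult)
  show ?thesis unfolding e1 e2 e3 using m
    by (simp add: powr_def exp_add[symmetric] algebra_simps)
qed

definition hh :: "real \<Rightarrow> real \<Rightarrow> ennreal" where
  "hh a u = (if u \<le> 0 then top else ennreal (u powr (-a)))"

lemma hh_meas[measurable]: "hh a \<in> borel_measurable borel"
  unfolding hh_def by measurable

definition C2 :: "real \<Rightarrow> real" where
  "C2 a = 1 + 2 powr (1+a) / (1 - 2 powr (a-1))"

locale setting =
  fixes M :: "real measure"
  assumes sets_M: "sets M = sets (restrict_space lborel Xsp)"
    and fin: "emeasure M Xsp \<noteq> top"
    and noatom: "\<And>x. emeasure M {x} = 0"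
begin

lemma space_M: "space M = Xsp"
  using sets_eq_imp_space_eq[OF sets_M] by (simp add: space_restrict_space)

sublocale finite_measure M
  by standard (simp add: space_M fin)

lemma inM: "S \<in> sets borel \<Longrightarrow> Xsp \<inter> S \<in> sets M"
  unfolding sets_M by (subst sets_restrict_space_iff) auto

lemma measM: "g \<in> borel_measurable borel \<Longrightarrow> g \<in> borel_measurable M"
  apply (subst measurable_cong_sets[OF sets_M refl])
  apply (rule measurable_restrict_space1) by simp

definition F :: "real \<Rightarrow> real" where "F x = measure M {y\<in>Xsp. y \<le> x}"

lemma setle: "{y\<in>Xsp. y \<le> x} \<in> sets M"
proof -
  have "{y\<in>Xsp. y \<le> x} = Xsp \<inter> {..x}" by auto
  thus ?thesis using inM[of "{..x}"] by simp
qed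
lemma setlt: "{y\<in>Xsp. y < x} \<in> sets M"
proof -
  have "{y\<in>Xsp. y < x} = Xsp \<inter> {..<x}" by auto
  thus ?thesis using inM[of "{..<x}"] by simp
qed

lemma F_mono: "mono F"
  unfolding mono_def F_def
  by (auto intro!: finite_measure_mono setle)

lemma F_meas[measurable]: "F \<in> borel_measurable M"
  by (rule measM, rule borel_measurable_mono[OF F_mono])

lemma F_lt: "measure M {y\<in>Xsp. y < x} = F x"
proof -
  have e: "{y\<in>Xsp. y \<le> x} = {y\<in>Xsp. y < x} \<union> (Xsp \<inter> {x})" by auto
  have "measure M (Xsp \<inter> {x}) = 0"
  proof -
    show ?thesis
    proof (cases "x \<in> Xsp")
      case True
      then have "Xsp \<inter> {x} = {x}" by auto
      thus ?thesis using noatom by (simp add: measure_def)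
    qed simp
  qed
  moreover have "measure M {y\<in>Xsp. y \<le> x} \<le> measure M {y\<in>Xsp. y < x} + measure M (Xsp \<inter> {x})"
    unfolding e by (rule measure_Un_le) (auto intro: setlt inM)
  moreover have "measure M {y\<in>Xsp. y < x} \<le> measure M {y\<in>Xsp. y \<le> x}"
    by (rule finite_measure_mono) (auto intro: setle)
  ultimately show ?thesis unfolding F_def by linarith
qed


lemma id_meas[measurable]: "(\<lambda>x. x) \<in> borel_measurable M"
  by (rule measM) simp

lemma F_borel[measurable]: "F \<in> borel_measurable borel"
  by (rule borel_measurable_mono[OF F_mono])

lemma meas_oc: "\<phi> \<le> \<theta> \<Longrightarrow> measure M {y\<in>Xsp. \<phi> < y \<and> y \<le> \<theta>} = F \<theta> - F \<phi>"
proof -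
  assume "\<phi> \<le> \<theta>"
  then have "{y\<in>Xsp. \<phi> < y \<and> y \<le> \<theta>} = {y\<in>Xsp. y \<le> \<theta>} - {y\<in>Xsp. y \<le> \<phi>}" by auto
  thus ?thesis unfolding F_def using \<open>\<phi> \<le> \<theta>\<close>
    by (simp add: finite_measure_Diff setle subset_iff)
qed

lemma meas_co: "\<theta> \<le> \<phi> \<Longrightarrow> measure M {y\<in>Xsp. \<theta> \<le> y \<and> y < \<phi>} = F \<phi> - F \<theta>"
proof -
  assume "\<theta> \<le> \<phi>"
  then have "{y\<in>Xsp. \<theta> \<le> y \<and> y < \<phi>} = {y\<in>Xsp. y < \<phi>} - {y\<in>Xsp. y < \<theta>}" by auto
  thus ?thesis using \<open>\<theta> \<le> \<phi>\<close>
    by (simp add: finite_measure_Diff setlt subset_iff F_lt)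
qed

lemma meas_cc: "\<phi> \<le> \<theta> \<Longrightarrow> measure M {y\<in>Xsp. \<phi> \<le> y \<and> y \<le> \<theta>} = F \<theta> - F \<phi>"
proof -
  assume "\<phi> \<le> \<theta>"
  then have "{y\<in>Xsp. \<phi> \<le> y \<and> y \<le> \<theta>} = {y\<in>Xsp. y \<le> \<theta>} - {y\<in>Xsp. y < \<phi>}" by auto
  thus ?thesis using \<open>\<phi> \<le> \<theta>\<close>
    by (simp add: finite_measure_Diff setle setlt subset_iff F_lt F_def[symmetric])
qed

lemma ballX_sets: "ballX \<theta> r \<in> sets M"
proof -
  have "ballX \<theta> r = Xsp \<inter> ball \<theta> r" by (auto simp: ballX_def dist_real_def)
  thus ?thesis using inM[of "ball \<theta> r"] by simp
qed

lemma K_lower: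
  assumes "\<theta> \<in> Xsp" "\<phi> \<in> Xsp"
  shows "\<bar>F \<theta> - F \<phi>\<bar> \<le> measure M (ballX \<theta> \<bar>\<theta> - \<phi>\<bar>)"
proof (cases "\<phi> \<le> \<theta>")
  case True
  have "{y\<in>Xsp. \<phi> < y \<and> y \<le> \<theta>} \<subseteq> ballX \<theta> \<bar>\<theta> - \<phi>\<bar>" by (auto simp: ballX_def)
  then have "measure M {y\<in>Xsp. \<phi> < y \<and> y \<le> \<theta>} \<le> measure M (ballX \<theta> \<bar>\<theta> - \<phi>\<bar>)"
    by (intro finite_measure_mono ballX_sets)
  moreover have "F \<phi> \<le> F \<theta>" using F_mono True by (simp add: mono_def)
  ultimately show ?thesis using meas_oc[OF True] by simp
next
  case False
  have "{y\<in>Xsp. \<theta> \<le> y \<and> y < \<phi>} \<subseteq> ballX \<theta> \<bar>\<theta> - \<phi>\<bar>" using False by (auto simp: ballX_def)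
  then have "measure M {y\<in>Xsp. \<theta> \<le> y \<and> y < \<phi>} \<le> measure M (ballX \<theta> \<bar>\<theta> - \<phi>\<bar>)"
    by (intro finite_measure_mono ballX_sets)
  moreover have "F \<theta> \<le> F \<phi>" using F_mono False by (simp add: mono_def)
  ultimately show ?thesis using meas_co[of \<theta> \<phi>] False by simp
qed


lemma GA:
  assumes A: "A \<in> sets M" "A \<subseteq> Xsp" and w: "0 \<le> w"
    and h: "\<And>x. x \<in> A \<Longrightarrow> measure M (A \<inter> {..x}) \<le> w"
  shows "measure M A \<le> w"
proof (cases "A = {}")
  case True thus ?thesis using w by simp
next
  case False
  have bdd: "bdd_above A" using A(2) by (auto simp: Xsp_def bdd_above_def intro!: exI[of _ pi])
  define b where "b = Sup A"
  have ub: "\<And>y. y \<in> A \<Longrightarrow> y \<le> b" unfolding b_def using bdd by (simp add: cSup_upper)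
  have Ax: "\<And>x. A \<inter> {..x} \<in> sets M"
  proof -
    fix x have "A \<inter> {..x} = A \<inter> (Xsp \<inter> {..x})" using A(2) by auto
    thus "A \<inter> {..x} \<in> sets M" using A(1) inM[of "{..x}"] by auto
  qed
  show ?thesis
  proof (cases "b \<in> A")
    case True
    have "A \<inter> {..b} = A" using ub by auto
    thus ?thesis using h[OF True] by simp
  next
    case nb: False
    define B where "B n = A \<inter> {..b - 1 / real (Suc n)}" for n
    have fr: "1 / real (Suc n) \<le> 1 / real (Suc m)" if "m \<le> n" for m n
      using that by (intro divide_left_mono) auto
    have inc: "incseq B" unfolding B_def incseq_def
    proof (intro allI impI subsetI)
      fix m n x assume "m \<le> n" "x \<in> A \<inter> {..b - 1 / real (Suc m)}"
      thus "x \<in> A \<inter> {..b - 1 / real (Suc n)}" using fr[of m n] by auto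
    qed
    have un: "(\<Union>n. B n) = A"
    proof
      show "(\<Union>n. B n) \<subseteq> A" by (auto simp: B_def)
    next
      show "A \<subseteq> (\<Union>n. B n)"
      proof
        fix y assume y: "y \<in> A"
        have "y < b" using ub[OF y] nb y by (metis order_less_le)
        then obtain n where "1 / real (Suc n) < b - y"
          using reals_Archimedean[of "b - y"] by (auto simp: inverse_eq_divide)
        then have "y \<in> B n" using y by (simp add: B_def)
        thus "y \<in> (\<Union>n. B n)" by blast
      qed
    qed
    have Bw: "measure M (B n) \<le> w" for n
    proof -
      have "b - 1 / real (Suc n) < Sup A" unfolding b_def[symmetric] by simp
      then obtain x where x: "x \<in> A" "b - 1 / real (Suc n) < x"
        using less_cSup_iff[OF False bdd] by blast
      have "B n \<subseteq> A \<inter> {..x}" using x by (auto simp: B_def)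
      then have "measure M (B n) \<le> measure M (A \<inter> {..x})"
        by (intro finite_measure_mono Ax)
      thus ?thesis using h[OF x(1)] by simp
    qed
    have "(\<lambda>n. measure M (B n)) \<longlonglongrightarrow> measure M (\<Union>n. B n)"
    proof -
      have "range B \<subseteq> sets M" by (auto simp: B_def Ax)
      thus ?thesis by (rule finite_Lim_measure_incseq[OF _ inc])
    qed
    then show ?thesis unfolding un using Bw by (intro LIMSEQ_le_const2) auto
  qed
qed

lemma GB:
  assumes A: "A \<in> sets M" "A \<subseteq> Xsp" and w: "0 \<le> w"
    and h: "\<And>x. x \<in> A \<Longrightarrow> measure M (A \<inter> {x..}) \<le> w"
  shows "measure M A \<le> w"
proof (cases "A = {}")
  case True thus ?thesis using w by simp
next
  case False
  have bdd: "bdd_below A" using A(2) by (auto simp: Xsp_def bdd_below_def intro!: exI[of _ 0])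
  define b where "b = Inf A"
  have ub: "\<And>y. y \<in> A \<Longrightarrow> b \<le> y" unfolding b_def using bdd by (simp add: cInf_lower)
  have Ax: "\<And>x. A \<inter> {x..} \<in> sets M"
  proof -
    fix x have "A \<inter> {x..} = A \<inter> (Xsp \<inter> {x..})" using A(2) by auto
    thus "A \<inter> {x..} \<in> sets M" using A(1) inM[of "{x..}"] by auto
  qed
  show ?thesis
  proof (cases "b \<in> A")
    case True
    have "A \<inter> {b..} = A" using ub by auto
    thus ?thesis using h[OF True] by simp
  next
    case nb: False
    define B where "B n = A \<inter> {b + 1 / real (Suc n)..}" for n
    have fr: "1 / real (Suc n) \<le> 1 / real (Suc m)" if "m \<le> n" for m n
      using that by (intro divide_left_mono) auto
    have inc: "incseq B" unfolding B_def incseq_def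
    proof (intro allI impI subsetI)
      fix m n x assume "m \<le> n" "x \<in> A \<inter> {b + 1 / real (Suc m)..}"
      thus "x \<in> A \<inter> {b + 1 / real (Suc n)..}" using fr[of m n] by auto
    qed
    have un: "(\<Union>n. B n) = A"
    proof
      show "(\<Union>n. B n) \<subseteq> A" by (auto simp: B_def)
    next
      show "A \<subseteq> (\<Union>n. B n)"
      proof
        fix y assume y: "y \<in> A"
        have "b < y" using ub[OF y] nb y by (metis order_less_le)
        then obtain n where "1 / real (Suc n) < y - b"
          using reals_Archimedean[of "y - b"] by (auto simp: inverse_eq_divide)
        then have "y \<in> B n" using y by (simp add: B_def)
        thus "y \<in> (\<Union>n. B n)" by blast
      qed
    qed
    have Bw: "measure M (B n) \<le> w" for n
    proof -
      have "Inf A < b + 1 / real (Suc n)" unfolding b_def[symmetric] by simp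
      then obtain x where x: "x \<in> A" "x < b + 1 / real (Suc n)"
        using cInf_less_iff[OF False bdd] by blast
      have "B n \<subseteq> A \<inter> {x..}" using x by (auto simp: B_def)
      then have "measure M (B n) \<le> measure M (A \<inter> {x..})"
        by (intro finite_measure_mono Ax)
      thus ?thesis using h[OF x(1)] by simp
    qed
    have "(\<lambda>n. measure M (B n)) \<longlonglongrightarrow> measure M (\<Union>n. B n)"
    proof -
      have "range B \<subseteq> sets M" by (auto simp: B_def Ax)
      thus ?thesis by (rule finite_Lim_measure_incseq[OF _ inc])
    qed
    then show ?thesis unfolding un using Bw by (intro LIMSEQ_le_const2) auto
  qed
qed


lemma cc_sets: "{y\<in>Xsp. \<phi> \<le> y \<and> y \<le> x} \<in> sets M"
proof -
  have "{y\<in>Xsp. \<phi> \<le> y \<and> y \<le> x} = Xsp \<inter> {\<phi>..x}" by auto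
  thus ?thesis using inM[of "{\<phi>..x}"] by simp
qed

lemma level:
  assumes "\<phi> \<in> Xsp" "0 < v"
  shows "measure M {\<theta>\<in>space M. \<bar>F \<theta> - F \<phi>\<bar> < v} \<le> 2 * v"
proof -
  define A where "A = {\<theta>\<in>space M. \<phi> \<le> \<theta> \<and> F \<theta> < F \<phi> + v}"
  define B where "B = {\<theta>\<in>space M. \<theta> \<le> \<phi> \<and> F \<phi> - v < F \<theta>}"
  have AM: "A \<in> sets M" unfolding A_def by measurable
  have BM: "B \<in> sets M" unfolding B_def by measurable
  have LM: "{\<theta>\<in>space M. \<bar>F \<theta> - F \<phi>\<bar> < v} \<in> sets M" by measurable
  have "measure M A \<le> v"
  proof (rule GA[OF AM])
    show "A \<subseteq> Xsp" by (auto simp: A_def space_M)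
    show "0 \<le> v" using assms by simp
    fix x assume x: "x \<in> A"
    have "A \<inter> {..x} \<subseteq> {y\<in>Xsp. \<phi> \<le> y \<and> y \<le> x}" by (auto simp: A_def space_M)
    then have "measure M (A \<inter> {..x}) \<le> measure M {y\<in>Xsp. \<phi> \<le> y \<and> y \<le> x}"
      by (intro finite_measure_mono cc_sets)
    also have "\<dots> = F x - F \<phi>" using x by (intro meas_cc) (auto simp: A_def)
    finally show "measure M (A \<inter> {..x}) \<le> v" using x by (auto simp: A_def)
  qed
  moreover have "measure M B \<le> v"
  proof (rule GB[OF BM])
    show "B \<subseteq> Xsp" by (auto simp: B_def space_M)
    show "0 \<le> v" using assms by simp
    fix x assume x: "x \<in> B"
    have "B \<inter> {x..} \<subseteq> {y\<in>Xsp. x \<le> y \<and> y \<le> \<phi>}" by (auto simp: B_def space_M)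
    then have "measure M (B \<inter> {x..}) \<le> measure M {y\<in>Xsp. x \<le> y \<and> y \<le> \<phi>}"
      by (intro finite_measure_mono cc_sets)
    also have "\<dots> = F \<phi> - F x" using x by (intro meas_cc) (auto simp: B_def)
    finally show "measure M (B \<inter> {x..}) \<le> v" using x by (auto simp: B_def)
  qed
  moreover have "{\<theta>\<in>space M. \<bar>F \<theta> - F \<phi>\<bar> < v} \<subseteq> A \<union> B"
  proof
    fix \<theta> assume th: "\<theta> \<in> {\<theta>\<in>space M. \<bar>F \<theta> - F \<phi>\<bar> < v}"
    show "\<theta> \<in> A \<union> B"
    proof (cases "\<phi> \<le> \<theta>")
      case True
      then have "F \<phi> \<le> F \<theta>" using F_mono by (simp add: mono_def)
      thus ?thesis using th True by (auto simp: A_def)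
    next
      case False
      then have "F \<theta> \<le> F \<phi>" using F_mono by (simp add: mono_def)
      thus ?thesis using th False by (auto simp: B_def)
    qed
  qed
  then have "measure M {\<theta>\<in>space M. \<bar>F \<theta> - F \<phi>\<bar> < v} \<le> measure M (A \<union> B)"
    using AM BM by (intro finite_measure_mono) auto
  moreover have "measure M (A \<union> B) \<le> measure M A + measure M B"
    using AM BM by (rule measure_Un_le)
  ultimately show ?thesis by linarith
qed

lemma null0:
  assumes "\<phi> \<in> Xsp"
  shows "{\<theta>\<in>space M. F \<theta> = F \<phi>} \<in> null_sets M"
proof -
  have ZM: "{\<theta>\<in>space M. F \<theta> = F \<phi>} \<in> sets M" by measurable
  have "emeasure M {\<theta>\<in>space M. F \<theta> = F \<phi>} \<le> 0"
  proof (rule ennreal_le_epsilon)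
    fix e :: real assume e: "0 < e"
    have LM: "{\<theta>\<in>space M. \<bar>F \<theta> - F \<phi>\<bar> < e/2} \<in> sets M" by measurable
    have "emeasure M {\<theta>\<in>space M. F \<theta> = F \<phi>} \<le> emeasure M {\<theta>\<in>space M. \<bar>F \<theta> - F \<phi>\<bar> < e/2}"
      using e LM by (intro emeasure_mono) auto
    also have "\<dots> = ennreal (measure M {\<theta>\<in>space M. \<bar>F \<theta> - F \<phi>\<bar> < e/2})"
      by (simp add: emeasure_eq_measure)
    also have "\<dots> \<le> ennreal e" using level[OF assms, of "e/2"] e by (intro ennreal_leI) simp
    finally show "emeasure M {\<theta>\<in>space M. F \<theta> = F \<phi>} \<le> 0 + ennreal e" by simp
  qed
  then show ?thesis using ZM by (auto intro: null_setsI)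
qed



lemma ennreal_le_suminf: "(f::nat\<Rightarrow>ennreal) k \<le> suminf f"
  by (metis ennreal_suminf_lessD less_irrefl not_le)

lemma intI:
  assumes phi: "\<phi> \<in> Xsp" and E: "E \<in> sets M" and a: "0 < a" "a < 1"
  shows "(\<integral>\<^sup>+\<theta>. indicator E \<theta> * hh a \<bar>F \<theta> - F \<phi>\<bar> \<partial>M) \<le> ennreal (C2 a * measure M E powr (1-a))"
proof (cases "measure M E = 0")
  case True
  then have "E \<in> null_sets M" using E by (simp add: emeasure_eq_measure null_sets_def)
  then have "(\<integral>\<^sup>+\<theta>. hh a \<bar>F \<theta> - F \<phi>\<bar> * indicator E \<theta> \<partial>M) = 0"
    by (rule nn_integral_null_set)
  then show ?thesis by (simp add: mult.commute)
next
  case False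
  define m where "m = measure M E"
  have m: "0 < m" using False measure_nonneg[of M E] unfolding m_def by linarith
  define L where "L k = {\<theta>\<in>space M. \<bar>F \<theta> - F \<phi>\<bar> < m / 2^k}" for k :: nat
  define c where "c k = (m / 2^(k+1)) powr (-a)" for k :: nat
  have LM: "L k \<in> sets M" for k unfolding L_def by measurable
  have pw: "AE \<theta> in M. indicator E \<theta> * hh a \<bar>F \<theta> - F \<phi>\<bar>
      \<le> ennreal (m powr (-a)) * indicator E \<theta> + (\<Sum>k. ennreal (c k) * indicator (L k) \<theta>)"
  proof (rule AE_I'[OF null0[OF phi]])
    show "{\<theta>\<in>space M. \<not> (indicator E \<theta> * hh a \<bar>F \<theta> - F \<phi>\<bar>
      \<le> ennreal (m powr (-a)) * indicator E \<theta> + (\<Sum>k. ennreal (c k) * indicator (L k) \<theta>))}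
      \<subseteq> {\<theta>\<in>space M. F \<theta> = F \<phi>}"
    proof (safe)
      fix \<theta> assume th: "\<theta> \<in> space M" and nle: "\<not> (indicator E \<theta> * hh a \<bar>F \<theta> - F \<phi>\<bar>
      \<le> ennreal (m powr (-a)) * indicator E \<theta> + (\<Sum>k. ennreal (c k) * indicator (L k) \<theta>))"
      show "F \<theta> = F \<phi>"
      proof (rule ccontr)
        assume ne: "F \<theta> \<noteq> F \<phi>"
        define u where "u = \<bar>F \<theta> - F \<phi>\<bar>"
        have u: "0 < u" using ne by (simp add: u_def)
        have hu: "hh a \<bar>F \<theta> - F \<phi>\<bar> = ennreal (u powr (-a))" using u by (simp add: hh_def u_def)
        have "indicator E \<theta> * hh a \<bar>F \<theta> - F \<phi>\<bar>
            \<le> ennreal (m powr (-a)) * indicator E \<theta> + (\<Sum>k. ennreal (c k) * indicator (L k) \<theta>)"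
        proof (cases "\<theta> \<in> E")
          case False thus ?thesis by simp
        next
          case inE: True
          show ?thesis
          proof (cases "m \<le> u")
            case True
            have "u powr (-a) \<le> m powr (-a)" using True m a by (intro powr_mono2') auto
            then have "indicator E \<theta> * hh a \<bar>F \<theta> - F \<phi>\<bar> \<le> ennreal (m powr (-a)) * indicator E \<theta>"
              using inE hu by (simp add: ennreal_leI)
            also have "\<dots> \<le> ennreal (m powr (-a)) * indicator E \<theta> + (\<Sum>k. ennreal (c k) * indicator (L k) \<theta>)"
              by (rule add_increasing2) simp_all
            finally show ?thesis .
          next
            case False
            have ex: "\<exists>k. m / 2^(k+1) \<le> u"
            proof -
              obtain n where "m / u < 2 ^ n" using real_arch_pow[of 2 "m/u"] by auto
              then have "m / 2^n < u" using u by (simp add: field_simps)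
              moreover have "m / 2^(n+1) \<le> m / 2^n" using m by (simp add: divide_left_mono)
              ultimately show ?thesis by (intro exI[of _ n]) simp
            qed
            define k where "k = (LEAST k. m / 2^(k+1) \<le> u)"
            have k1: "m / 2^(k+1) \<le> u" unfolding k_def using ex by (rule LeastI_ex)
            have k2: "u < m / 2^k"
            proof (cases k)
              case 0 thus ?thesis using False by simp
            next
              case (Suc j)
              have "\<not> m / 2^(j+1) \<le> u"
              proof
                assume "m / 2^(j+1) \<le> u"
                then have "k \<le> j" unfolding k_def by (rule Least_le)
                thus False using Suc by simp
              qed
              thus ?thesis using Suc by simp
            qed
            have thL: "\<theta> \<in> L k" using th k2 by (simp add: L_def u_def)
            have "u powr (-a) \<le> c k" unfolding c_def using k1 m a by (intro powr_mono2') auto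
            then have "indicator E \<theta> * hh a \<bar>F \<theta> - F \<phi>\<bar> \<le> ennreal (c k) * indicator (L k) \<theta>"
              using inE hu thL by (simp add: ennreal_leI)
            also have "\<dots> \<le> (\<Sum>k. ennreal (c k) * indicator (L k) \<theta>)"
              by (rule ennreal_le_suminf)
            also have "\<dots> \<le> ennreal (m powr (-a)) * indicator E \<theta> + (\<Sum>k. ennreal (c k) * indicator (L k) \<theta>)"
              by (rule add_increasing) simp_all
            finally show ?thesis .
          qed
        qed
        thus False using nle by simp
      qed
    qed
  qed
  have "(\<integral>\<^sup>+\<theta>. indicator E \<theta> * hh a \<bar>F \<theta> - F \<phi>\<bar> \<partial>M)
      \<le> (\<integral>\<^sup>+\<theta>. ennreal (m powr (-a)) * indicator E \<theta> + (\<Sum>k. ennreal (c k) * indicator (L k) \<theta>) \<partial>M)"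
    by (rule nn_integral_mono_AE[OF pw])
  also have "\<dots> = ennreal (m powr (-a)) * emeasure M E + (\<Sum>k. ennreal (c k) * emeasure M (L k))"
    using E LM by (simp add: nn_integral_add nn_integral_suminf nn_integral_cmult_indicator)
  also have "\<dots> \<le> ennreal (m powr (1-a)) + ennreal (2 powr (1+a) * m powr (1-a) / (1 - 2 powr (a-1)))"
  proof (rule add_mono)
    have "ennreal (m powr (-a)) * emeasure M E = ennreal (m powr (-a) * m)"
      using m by (simp add: emeasure_eq_measure m_def ennreal_mult)
    also have "m powr (-a) * m = m powr (1-a)" using m by (simp add: powr_diff powr_minus divide_inverse)
    finally show "ennreal (m powr (-a)) * emeasure M E \<le> ennreal (m powr (1-a))" by simp
  next
    define q where "q = (2::real) powr (a-1)"
    define D where "D = 2 powr (1+a) * m powr (1-a)"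
    have q: "0 \<le> q" "q < 1" using a by (auto simp: q_def intro!: powr_less_one)
    have trm: "ennreal (c k) * emeasure M (L k) \<le> ennreal (D * q^k)" for k
    proof -
      have "emeasure M (L k) = ennreal (measure M (L k))" by (simp add: emeasure_eq_measure)
      also have "\<dots> \<le> ennreal (2 * (m / 2^k))"
        using level[OF phi, of "m / 2^k"] m by (intro ennreal_leI) (simp add: L_def)
      finally have "ennreal (c k) * emeasure M (L k) \<le> ennreal (c k) * ennreal (2 * (m / 2^k))"
        by (rule mult_left_mono) simp
      also have "\<dots> = ennreal (c k * (2 * (m / 2^k)))"
        using m by (intro ennreal_mult[symmetric]) (auto simp: c_def)
      also have "c k * (2 * (m / 2^k)) = D * q^k" unfolding c_def D_def q_def using series_id[OF m] .
      finally show ?thesis .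
    qed
    have "(\<Sum>k. ennreal (c k) * emeasure M (L k)) \<le> (\<Sum>k. ennreal (D * q^k))"
      by (intro suminf_le trm) auto
    also have "\<dots> = ennreal (D / (1 - q))"
    proof (rule suminf_ennreal_eq)
      show "0 \<le> D * q^k" for k using q by (simp add: D_def)
      show "(\<lambda>k. D * q^k) sums (D / (1 - q))"
        using sums_mult[OF geometric_sums[of q], of D] q by (simp add: divide_inverse)
    qed
    finally show "(\<Sum>k. ennreal (c k) * emeasure M (L k)) \<le> ennreal (2 powr (1+a) * m powr (1-a) / (1 - 2 powr (a-1)))"
      by (simp add: D_def q_def)
  qed
  also have "\<dots> = ennreal (C2 a * measure M E powr (1-a))"
  proof -
    have "1 - 2 powr (a-1) > 0" using a by (simp add: powr_less_one)
    then show ?thesis unfolding C2_def m_def[symmetric]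
      by (subst ennreal_plus[symmetric]) (auto simp: field_simps)
  qed
  finally show ?thesis .
qed

end

context setting begin

lemma KB:
  assumes c: "0 < c" and xi: "0 < \<xi>" "\<xi> < s"
    and ball_lower: "\<And>\<theta> r. \<theta> \<in> Xsp \<Longrightarrow> 0 < r \<Longrightarrow> r < pi \<Longrightarrow> measure M (ballX \<theta> r) \<ge> c * r powr s"
    and th: "\<theta> \<in> Xsp" and ph: "\<phi> \<in> Xsp"
  shows "ennreal (\<bar>\<theta> - \<phi>\<bar> powr \<xi> / measure M (ballX \<theta> \<bar>\<theta> - \<phi>\<bar>))
           \<le> ennreal (c powr (-(\<xi>/s))) * hh (1 - \<xi>/s) \<bar>F \<theta> - F \<phi>\<bar>"
proof (cases "\<theta> = \<phi>")
  case True thus ?thesis by simp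
next
  case False
  define d where "d = \<bar>\<theta> - \<phi>\<bar>"
  define B where "B = measure M (ballX \<theta> d)"
  define u where "u = \<bar>F \<theta> - F \<phi>\<bar>"
  define b where "b = \<xi> / s"
  have s0: "0 < s" using xi by simp
  have b: "0 < b" "b < 1" using xi s0 by (auto simp: b_def)
  have d: "0 < d" "d < pi" using False th ph by (auto simp: d_def Xsp_def)
  have Bl: "c * d powr s \<le> B" unfolding B_def by (rule ball_lower[OF th d])
  have Bp: "0 < B" using Bl c d by (smt (verit) mult_pos_pos powr_gt_zero)
  have uB: "u \<le> B" unfolding u_def B_def d_def by (rule K_lower[OF th ph])
  show ?thesis
  proof (cases "u \<le> 0")
    case True
    have "c powr (-(\<xi>/s)) > 0" using c by simp
    then have "ennreal (c powr (-(\<xi>/s))) \<noteq> 0" by simp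
    thus ?thesis using True by (simp add: hh_def u_def[symmetric] ennreal_mult_top)
  next
    case False
    then have u: "0 < u" by simp
    have "d powr \<xi> = (d powr s) powr b" using s0 by (simp add: powr_powr b_def)
    also have "\<dots> \<le> (B / c) powr b"
      using Bl c b by (intro powr_mono2) (auto simp: field_simps)
    also have "\<dots> = B powr b / c powr b" using Bp c by (simp add: powr_divide)
    finally have "d powr \<xi> / B \<le> B powr b / c powr b / B"
      using Bp by (intro divide_right_mono) auto
    also have "\<dots> = c powr (-b) * B powr (b - 1)"
      using Bp c by (simp add: powr_diff powr_minus divide_inverse)
    also have "\<dots> \<le> c powr (-b) * u powr (b - 1)"
      using u uB b by (intro mult_left_mono powr_mono2') auto
    finally have real: "d powr \<xi> / B \<le> c powr (-b) * u powr (-(1 - \<xi>/s))"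
      by (simp add: b_def)
    have "ennreal (d powr \<xi> / B) \<le> ennreal (c powr (-b) * u powr (-(1 - \<xi>/s)))"
      by (rule ennreal_leI[OF real])
    also have "\<dots> = ennreal (c powr (-(\<xi>/s))) * hh (1 - \<xi>/s) u"
      using u by (simp add: hh_def b_def ennreal_mult)
    finally show ?thesis by (simp add: d_def B_def u_def)
  qed
qed


lemma main:
  assumes xi: "0 < \<xi>" and s: "s > \<xi>" and c: "c > 0"
    and ball_lower: "\<And>\<theta> r. \<theta> \<in> Xsp \<Longrightarrow> 0 < r \<Longrightarrow> r < pi \<Longrightarrow> measure M (ballX \<theta> r) \<ge> c * r powr s"
  shows "\<exists>C. \<forall>f t. integrable M f \<longrightarrow> t > 0 \<longrightarrow>
           emeasure M {\<theta> \<in> space M. U_op M \<xi> (\<lambda>x. \<bar>f x\<bar>) \<theta> > ennreal t}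
             \<le> ennreal ((C * (\<integral>x. \<bar>f x\<bar> \<partial>M) / t) powr (s / (s - \<xi>)))"
proof -
  define a where "a = 1 - \<xi>/s"
  have s0: "0 < s" using xi s by simp
  have a: "0 < a" "a < 1" using xi s s0 by (auto simp: a_def field_simps)
  define C0 where "C0 = c powr (-(\<xi>/s))"
  have C0: "0 < C0" using c by (simp add: C0_def)
  have C2p: "0 < C2 a"
  proof -
    have "2 powr (a-1) < (1::real)" using a by (simp add: powr_less_one)
    then have "0 < 2 powr (1 + a) / (1 - 2 powr (a - 1))" by simp
    then show ?thesis unfolding C2_def by linarith
  qed
  interpret P: pair_sigma_finite M M by unfold_locales
  show ?thesis
  proof (intro exI[of _ "C0 * C2 a"] allI impI)
    fix f :: "real \<Rightarrow> real" and t :: real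
    assume f: "integrable M f" and t: "0 < t"
    have fm[measurable]: "f \<in> borel_measurable M" using f by (rule borel_measurable_integrable)
    define E where "E = {\<theta> \<in> space M. U_op M \<xi> (\<lambda>x. \<bar>f x\<bar>) \<theta> > ennreal t}"
    define N where "N = (\<integral>x. \<bar>f x\<bar> \<partial>M)"
    have N0: "0 \<le> N" unfolding N_def by simp
    have Nint: "(\<integral>\<^sup>+x. ennreal \<bar>f x\<bar> \<partial>M) = ennreal N"
      unfolding N_def by (rule nn_integral_eq_integral) (auto simp: f)
    show "emeasure M E \<le> ennreal ((C0 * C2 a * N / t) powr (s / (s - \<xi>)))"
    proof (cases "E \<in> sets M")
      case False thus ?thesis by (simp add: emeasure_notin_sets)
    next
      case EM[measurable]: True
      define m where "m = measure M E"
      show ?thesis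
      proof (cases "m = 0")
        case True thus ?thesis by (simp add: emeasure_eq_measure m_def)
      next
        case False
        then have m: "0 < m" using measure_nonneg[of M E] unfolding m_def by linarith
        define G where "G \<theta> \<phi> = indicator E \<theta> * (ennreal C0 * hh a \<bar>F \<theta> - F \<phi>\<bar> * ennreal \<bar>f \<phi>\<bar>)"
          for \<theta> \<phi>
        have Gm: "case_prod G \<in> borel_measurable (M \<Otimes>\<^sub>M M)" unfolding G_def by measurable
        have Gm1: "G \<theta> \<in> borel_measurable M" for \<theta> unfolding G_def by measurable
        have "ennreal t * emeasure M E = (\<integral>\<^sup>+\<theta>. ennreal t * indicator E \<theta> \<partial>M)"
          by (simp add: nn_integral_cmult_indicator)
        also have "\<dots> \<le> (\<integral>\<^sup>+\<theta>. (\<integral>\<^sup>+\<phi>. G \<theta> \<phi> \<partial>M) \<partial>M)"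
        proof (rule nn_integral_mono)
          fix \<theta> assume th: "\<theta> \<in> space M"
          show "ennreal t * indicator E \<theta> \<le> (\<integral>\<^sup>+\<phi>. G \<theta> \<phi> \<partial>M)"
          proof (cases "\<theta> \<in> E")
            case False thus ?thesis by simp
          next
            case True
            have "ennreal t \<le> U_op M \<xi> (\<lambda>x. \<bar>f x\<bar>) \<theta>" using True by (auto simp: E_def intro: less_imp_le)
            also have "\<dots> \<le> (\<integral>\<^sup>+\<phi>. ennreal C0 * hh a \<bar>F \<theta> - F \<phi>\<bar> * ennreal \<bar>f \<phi>\<bar> \<partial>M)"
              unfolding U_op_def
            proof (rule nn_integral_mono)
              fix \<phi> assume ph: "\<phi> \<in> space M"
              have "ennreal (\<bar>\<theta> - \<phi>\<bar> powr \<xi> / measure M (ballX \<theta> \<bar>\<theta> - \<phi>\<bar>) * \<bar>f \<phi>\<bar>)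
                  = ennreal (\<bar>\<theta> - \<phi>\<bar> powr \<xi> / measure M (ballX \<theta> \<bar>\<theta> - \<phi>\<bar>)) * ennreal \<bar>f \<phi>\<bar>"
                by (rule ennreal_mult) auto
              also have "\<dots> \<le> ennreal C0 * hh a \<bar>F \<theta> - F \<phi>\<bar> * ennreal \<bar>f \<phi>\<bar>"
                unfolding C0_def a_def
                by (rule mult_right_mono[OF KB[OF c xi s ball_lower]]) (use th ph space_M in auto)
              finally show "ennreal (\<bar>\<theta> - \<phi>\<bar> powr \<xi> / measure M (ballX \<theta> \<bar>\<theta> - \<phi>\<bar>) * \<bar>f \<phi>\<bar>)
                  \<le> ennreal C0 * hh a \<bar>F \<theta> - F \<phi>\<bar> * ennreal \<bar>f \<phi>\<bar>" .
            qed
            also have "\<dots> = (\<integral>\<^sup>+\<phi>. G \<theta> \<phi> \<partial>M)" using True by (simp add: G_def)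
            finally show ?thesis using True by simp
          qed
        qed
        also have "\<dots> = (\<integral>\<^sup>+\<phi>. (\<integral>\<^sup>+\<theta>. G \<theta> \<phi> \<partial>M) \<partial>M)"
          by (rule P.Fubini'[OF Gm, symmetric])
        also have "\<dots> \<le> (\<integral>\<^sup>+\<phi>. ennreal (C0 * C2 a * m powr (1-a)) * ennreal \<bar>f \<phi>\<bar> \<partial>M)"
        proof (rule nn_integral_mono)
          fix \<phi> assume ph: "\<phi> \<in> space M"
          have "(\<integral>\<^sup>+\<theta>. G \<theta> \<phi> \<partial>M)
              = (\<integral>\<^sup>+\<theta>. (ennreal C0 * ennreal \<bar>f \<phi>\<bar>) * (indicator E \<theta> * hh a \<bar>F \<theta> - F \<phi>\<bar>) \<partial>M)"
            unfolding G_def by (rule nn_integral_cong) (simp add: ac_simps)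
          also have "\<dots> = (ennreal C0 * ennreal \<bar>f \<phi>\<bar>) * (\<integral>\<^sup>+\<theta>. indicator E \<theta> * hh a \<bar>F \<theta> - F \<phi>\<bar> \<partial>M)"
            by (rule nn_integral_cmult) measurable
          also have "\<dots> \<le> (ennreal C0 * ennreal \<bar>f \<phi>\<bar>) * ennreal (C2 a * m powr (1-a))"
            unfolding m_def
            by (rule mult_left_mono[OF intI]) (use ph space_M a in auto)
          also have "\<dots> = ennreal (C0 * C2 a * m powr (1-a)) * ennreal \<bar>f \<phi>\<bar>"
            using C0 C2p by (simp add: ennreal_mult[symmetric] ac_simps)
          finally show "(\<integral>\<^sup>+\<theta>. G \<theta> \<phi> \<partial>M) \<le> ennreal (C0 * C2 a * m powr (1-a)) * ennreal \<bar>f \<phi>\<bar>" .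
        qed
        also have "\<dots> = ennreal (C0 * C2 a * m powr (1-a)) * ennreal N"
          by (subst nn_integral_cmult) (auto simp: Nint)
        also have "\<dots> = ennreal (C0 * C2 a * m powr (1-a) * N)"
          using C0 C2p N0 by (simp add: ennreal_mult)
        finally have "ennreal (t * m) \<le> ennreal (C0 * C2 a * m powr (1-a) * N)"
          using t m by (simp add: emeasure_eq_measure m_def ennreal_mult)
        then have ineq: "t * m \<le> C0 * C2 a * m powr (1-a) * N"
          using C0 C2p N0 by (subst (asm) ennreal_le_iff) auto
        have mm: "m = m powr a * m powr (1-a)" using m by (simp add: powr_add[symmetric])
        have "t * m powr a * m powr (1-a) \<le> (C0 * C2 a * N) * m powr (1-a)"
          using ineq mm by (simp add: ac_simps)
        then have "t * m powr a \<le> C0 * C2 a * N" using m by simp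
        then have ma: "m powr a \<le> C0 * C2 a * N / t" using t by (simp add: field_simps)
        have "m = (m powr a) powr (1/a)" using m a by (simp add: powr_powr)
        also have "\<dots> \<le> (C0 * C2 a * N / t) powr (1/a)"
          using ma a m by (intro powr_mono2) auto
        also have "1/a = s / (s - \<xi>)" using s0 xi s by (simp add: a_def field_simps)
        finally show ?thesis by (simp add: emeasure_eq_measure m_def ennreal_leI)
      qed
    qed
  qed
qed

end

lemma ballX_all: "ballX (pi/2) (3*pi/4) = Xsp"
  using pi_gt_zero by (auto simp: ballX_def Xsp_def abs_if)

lemma fin_from_ball:
  assumes c: "c > 0"
    and ball_lower: "\<And>\<theta> r. \<theta> \<in> Xsp \<Longrightarrow> 0 < r \<Longrightarrow> r < pi \<Longrightarrow> measure M (ballX \<theta> r) \<ge> c * r powr s"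
  shows "emeasure M Xsp \<noteq> top"
proof
  assume "emeasure M Xsp = top"
  then have "measure M Xsp = 0" by (simp add: measure_def)
  moreover have "measure M (ballX (pi/2) (3*pi/4)) \<ge> c * (3*pi/4) powr s"
    by (rule ball_lower) (auto simp: Xsp_def)
  moreover have "c * (3*pi/4) powr s > 0" using c by simp
  ultimately show False by (simp add: ballX_all)
qed

lemma leb_sets: "sets leb_X = sets (restrict_space lborel Xsp)"
  by (simp add: leb_X_def)

lemma mu_sets: "sets (mu_ab a b) = sets (restrict_space lborel Xsp)"
  by (simp add: mu_ab_def)

lemma single_sets: "{x} \<in> sets (restrict_space lborel Xsp) \<Longrightarrow> x \<in> Xsp"
  by (subst (asm) sets_restrict_space_iff) auto

lemma leb_atom: "emeasure leb_X {x} = 0"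
proof (cases "{x} \<in> sets leb_X")
  case True
  then have "x \<in> Xsp" using single_sets leb_sets by auto
  then show ?thesis unfolding leb_X_def
    by (subst emeasure_restrict_space) auto
qed (simp add: emeasure_notin_sets)

lemma mu_atom: "emeasure (mu_ab a b) {x} = 0"
proof (cases "{x} \<in> sets (mu_ab a b)")
  case True
  then have x: "x \<in> Xsp" using single_sets mu_sets by auto
  have xs: "{x} \<in> sets (restrict_space lborel Xsp)" using True mu_sets by auto
  have nul: "{x} \<in> null_sets (restrict_space lborel Xsp)"
    using xs x by (auto simp: null_sets_def emeasure_restrict_space)
  have "emeasure (mu_ab a b) {x} = (\<integral>\<^sup>+ y. ennreal (sin (y/2) powr (2*a+1) * cos (y/2) powr (2*b+1)) * indicator {x} y \<partial>restrict_space lborel Xsp)"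
    unfolding mu_ab_def
    by (rule emeasure_density[OF _ xs], rule measurable_restrict_space1, simp only: measurable_lborel2) measurable
  also have "\<dots> = 0" using nn_integral_null_set[OF nul] by simp
  finally show ?thesis .
qed (simp add: emeasure_notin_sets)

theorem lemma4p1:
  fixes M :: "real measure" and \<xi> s c :: real
  assumes M_choice: "M = leb_X \<or> (\<exists>\<alpha> \<beta>. \<alpha> > -1 \<and> \<beta> > -1 \<and> M = mu_ab \<alpha> \<beta>)"
    and xi: "0 < \<xi>" "\<xi> \<le> 1"
    and s: "s > \<xi>" and c: "c > 0"
    and ball_lower: "\<And>\<theta> r. \<theta> \<in> Xsp \<Longrightarrow> 0 < r \<Longrightarrow> r < pi \<Longrightarrow> measure M (ballX \<theta> r) \<ge> c * r powr s"
  shows "\<exists>C. \<forall>f t. integrable M f \<longrightarrow> t > 0 \<longrightarrow>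
           emeasure M {\<theta> \<in> space M. U_op M \<xi> (\<lambda>x. \<bar>f x\<bar>) \<theta> > ennreal t}
             \<le> ennreal ((C * (\<integral>x. \<bar>f x\<bar> \<partial>M) / t) powr (s / (s - \<xi>)))"
proof -
  have sM: "sets M = sets (restrict_space lborel Xsp)"
    using M_choice leb_sets mu_sets by auto
  have na: "\<And>x. emeasure M {x} = 0"
    using M_choice leb_atom mu_atom by auto
  have fin: "emeasure M Xsp \<noteq> top" by (rule fin_from_ball[OF c ball_lower])
  interpret setting M by unfold_locales (use sM fin na in auto)
  show ?thesis by (rule main[OF xi(1) s c ball_lower])
qed

end
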